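(* Assume (S). There is a constant $c_0>0$ depending only on $m$, $L$ and $\sigma_{max}:=1+\max_{\bar D\times[-H-1,-H]}\sigma$ such that for every $u\in\bar S_0$ and every $\delta\in(0,1)$, $$\int_{\Omega_\delta(u)}\sigma_\delta|\nabla h_{u,\delta}|^2\,d(x,z)\le c_0\big(1+\|u\|_{L_2(D)}^2+\|\partial_xu\|_{L_2(D)}^2\big).$$
   Context: Standing setting (S): $L>0$, $D=(-L,L)$, $H>0$, $\mathcal R_\delta=D\times(-H-\delta,-H)$; for $u:\bar D\to[-H,\infty)$, $\Omega(u)=\{(x,z): x\in D,\ -H<z<u(x)\}$, $\Omega_\delta(u)=\{(x,z): x\in D,\ -H-\delta<z<u(x)\}$. $\bar S_0=\{u\in H^2(D): u(\pm L)=\partial_xu(\pm L)=0,\ u\ge -H\}$. $\sigma\in C^2(\bar D\times[-H-1,-H])$, $\sigma>0$; $\sigma_\delta=\delta\sigma$ on $\mathcal R_\delta$, $\sigma_\delta=1$ on $D\times(-H,\infty)$. $h_b\in C^2(\bar D\times[-H-1,-H]\times[-H,\infty))$, $h\in C^2(\bar D\times[-H,\infty)\times[-H,\infty))$ with $h_b(x,-H,w)=h(x,-H,w)$, $\sigma(x,-H)\partial_zh_b(x,-H,w)=\partial_zh(x,-H,w)$, $\partial_wh_b(x,-H-1,w)=0$, and for some $m>0$: $|\partial_xh_b|+|\partial_zh_b|\le\sqrt{m(1+w^2)}$, $|\partial_wh_b|\le\sqrt m$; $|\partial_xh|+|\partial_zh|\le\sqrt{m(1+w^2)/(H+w)}$,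 $|\partial_wh|\le\sqrt{m/(H+w)}$; and for some $K>0$: $|\partial_xh(x,w,w)|+|\partial_zh(x,w,w)+\partial_wh(x,w,w)|\le K$. $h_\delta(x,z,w)=h_b(x,-H+(z+H)/\delta,w)$ for $z\in[-H-\delta,-H)$, $=h(x,z,w)$ for $z\ge-H$; $h_{u,\delta}(x,z)=h_\delta(x,z,u(x))$. *)

theory Defs
  imports "HOL-Analysis.Analysis"
begin

definition pd :: "('a::euclidean_space \<Rightarrow> real) \<Rightarrow> 'a \<Rightarrow> 'a \<Rightarrow> real" where
  "pd f v p = deriv (\<lambda>t. f (p + t *\<^sub>R v)) 0"

definition C2_on :: "'a::euclidean_space set \<Rightarrow> ('a \<Rightarrow> real) \<Rightarrow> bool" where
  "C2_on S f \<longleftrightarrow> (\<exists>U. open U \<and> S \<subseteq> U \<and>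
     (\<forall>v\<in>Basis.
        (\<forall>p\<in>U. (\<lambda>t. f (p + t *\<^sub>R v)) differentiable (at 0)) \<and>
        continuous_on U (pd f v) \<and>
        (\<forall>w\<in>Basis.
           (\<forall>p\<in>U. (\<lambda>t. pd f v (p + t *\<^sub>R w)) differentiable (at 0)) \<and>
           continuous_on U (pd (pd f v) w))))"

(* H^2(a,b), via its standard characterization on a bounded interval:
   u is C^1 on [a,b] with derivative u', and u' is absolutely continuous with u'' = g in L^2(a,b). *)
definition S0bar :: "real \<Rightarrow> real \<Rightarrow> (real \<Rightarrow> real) \<Rightarrow> bool" where
  "S0bar L H u \<longleftrightarrow> (\<exists>u' g.
      (\<forall>x\<in>{-L..L}. (u has_real_derivative u' x) (at x within {-L..L})) \<and>
      g \<in> borel_measurable lborel \<and>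
      set_integrable lborel {-L..L} (\<lambda>x. (g x)\<^sup>2) \<and>
      (\<forall>x\<in>{-L..L}. u' x = u' (-L) + (LBINT t=-L..x. g t)) \<and>
      u (-L) = 0 \<and> u L = 0 \<and> u' (-L) = 0 \<and> u' L = 0 \<and>
      (\<forall>x\<in>{-L..L}. u x \<ge> -H))"

definition Omega_delta :: "real \<Rightarrow> real \<Rightarrow> real \<Rightarrow> (real \<Rightarrow> real) \<Rightarrow> (real \<times> real) set" where
  "Omega_delta L H \<delta> u = {(x, z). -L < x \<and> x < L \<and> -H - \<delta> < z \<and> z < u x}"

definition sigma_delta :: "real \<Rightarrow> real \<Rightarrow> (real \<times> real \<Rightarrow> real) \<Rightarrow> real \<times> real \<Rightarrow> real" where
  "sigma_delta H \<delta> \<sigma> p = (if snd p < -H then \<delta> * \<sigma> p else 1)"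

definition h_delta :: "real \<Rightarrow> real \<Rightarrow> (real \<times> real \<times> real \<Rightarrow> real) \<Rightarrow> (real \<times> real \<times> real \<Rightarrow> real)
    \<Rightarrow> real \<Rightarrow> real \<Rightarrow> real \<Rightarrow> real" where
  "h_delta H \<delta> hb h x z w = (if z < -H then hb (x, -H + (z + H) / \<delta>, w) else h (x, z, w))"

definition grad_sq :: "((real \<times> real) \<Rightarrow> real) \<Rightarrow> real \<times> real \<Rightarrow> real" where
  "grad_sq F p = (frechet_derivative F (at p) (1, 0))\<^sup>2 + (frechet_derivative F (at p) (0, 1))\<^sup>2"

end

theory Submission
  imports Defs
begin


lemma D2:
  fixes \<phi> :: "real \<times> real \<Rightarrow> real"
  assumes dz: "((\<lambda>z. \<phi> (z, w0)) has_real_derivative A) (at z0)"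
    and V: "open V" "(z0, w0) \<in> V"
    and dw: "\<And>z w. (z, w) \<in> V \<Longrightarrow> ((\<lambda>w. \<phi> (z, w)) has_real_derivative B (z, w)) (at w)"
    and Bc: "continuous_on V B"
  shows "(\<phi> has_derivative (\<lambda>(b, c). b * A + c * B (z0, w0))) (at (z0, w0))"
proof -
  obtain r where r: "r > 0" "ball (z0, w0) r \<subseteq> V" using V open_contains_ball by blast
  define Z where "Z = ball z0 (r/2)"
  define W where "W = ball w0 (r/2)"
  have ZW: "Z \<times> W \<subseteq> V"
  proof
    fix p assume "p \<in> Z \<times> W"
    then obtain z w where p: "p = (z,w)" "dist z0 z < r/2" "dist w0 w < r/2"
      by (auto simp: Z_def W_def)
    have "dist (z0, w0) (z, w) \<le> dist z0 z + dist w0 w" unfolding dist_Pair_Pair by (rule sqrt_sum_squares_le_sum_abs[THEN order_trans]) simp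
    then show "p \<in> V" using p r by auto
  qed
  have oZW: "open (Z \<times> W)" by (simp add: Z_def W_def open_Times)
  have inZW: "(z0, w0) \<in> Z \<times> W" using r by (simp add: Z_def W_def)
  have "((\<lambda>(x, y). \<phi> (x, y)) has_derivative (\<lambda>(tx, ty). tx * A + blinfun_mult_left (B (z0, w0)) ty))
      (at (z0, w0) within Z \<times> W)"
  proof (rule has_derivative_partialsI)
    show "((\<lambda>x. \<phi> (x, w0)) has_derivative (\<lambda>tx. tx * A)) (at z0 within Z)"
    proof -
      have e: "(\<lambda>tx. tx * A) = (*) A" by (rule ext) simp
      show ?thesis using dz unfolding e has_field_derivative_def by (rule has_derivative_at_withinI)
    qed
    show "((\<lambda>y. \<phi> (x, y)) has_derivative blinfun_apply (blinfun_mult_left (B (x, y)))) (at y within W)"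
      if "x \<in> Z" "y \<in> W" for x y
    proof -
      have "(x, y) \<in> V" using ZW that by auto
      moreover have e: "blinfun_apply (blinfun_mult_left (B (x, y))) = (*) (B (x, y))" by (rule ext) simp
      ultimately show ?thesis using dw[of x y] unfolding e has_field_derivative_def by (rule_tac has_derivative_at_withinI)
    qed
    have "continuous (at (z0, w0) within Z \<times> W) B"
      using Bc V(1) V(2) continuous_on_eq_continuous_at continuous_at_imp_continuous_at_within by blast
    then show "continuous (at (z0, w0) within Z \<times> W) (\<lambda>(x, y). blinfun_mult_left (B (x, y)))"
      by (auto intro!: continuous_intros simp: case_prod_beta')
    show "w0 \<in> W" using r by (simp add: W_def)
    show "convex W" by (simp add: W_def)
  qed
  then show ?thesis
    using at_within_open[OF inZW oZW] by (simp add: case_prod_beta' mult.commute)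
qed

lemma D3:
  fixes f :: "real \<times> real \<times> real \<Rightarrow> real"
  assumes U: "open U" "(x0, z0, w0) \<in> U"
    and dx: "((\<lambda>s. f (s, z0, w0)) has_real_derivative P1) (at x0)"
    and dz: "\<And>x z w. (x, z, w) \<in> U \<Longrightarrow> ((\<lambda>s. f (x, s, w)) has_real_derivative P2 (x, z, w)) (at z)"
    and dw: "\<And>x z w. (x, z, w) \<in> U \<Longrightarrow> ((\<lambda>s. f (x, z, s)) has_real_derivative P3 (x, z, w)) (at w)"
    and c2: "continuous_on U P2" and c3: "continuous_on U P3"
  shows "(f has_derivative (\<lambda>(a, b, c). a * P1 + b * P2 (x0, z0, w0) + c * P3 (x0, z0, w0))) (at (x0, z0, w0))"
proof -
  obtain r where r: "r > 0" "ball (x0, z0, w0) r \<subseteq> U" using U open_contains_ball by blast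
  define X where "X = ball x0 (r/2)"
  define Y where "Y = ball (z0, w0) (r/2)"
  have XY: "X \<times> Y \<subseteq> U"
  proof
    fix p assume "p \<in> X \<times> Y"
    then obtain x y where p: "p = (x,y)" "dist x0 x < r/2" "dist (z0,w0) y < r/2"
      by (auto simp: X_def Y_def)
    have "dist (x0, (z0, w0)) (x, y) \<le> dist x0 x + dist (z0,w0) y"
      unfolding dist_Pair_Pair by (rule sqrt_sum_squares_le_sum_abs[THEN order_trans]) simp
    then show "p \<in> U" using p r by auto
  qed
  have oXY: "open (X \<times> Y)" by (simp add: X_def Y_def open_Times)
  have inXY: "(x0, z0, w0) \<in> X \<times> Y" using r by (simp add: X_def Y_def)
  define fy where "fy = (\<lambda>(x::real) (y::real\<times>real). (blinfun_mult_left (P2 (x, y)) o\<^sub>L fst_blinfun) + (blinfun_mult_left (P3 (x, y)) o\<^sub>L snd_blinfun))"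
  have "((\<lambda>(x, y). f (x, y)) has_derivative (\<lambda>(tx, ty). tx * P1 + fy x0 (z0, w0) ty))
      (at (x0, (z0, w0)) within X \<times> Y)"
  proof (rule has_derivative_partialsI)
    show "((\<lambda>x. f (x, (z0, w0))) has_derivative (\<lambda>tx. tx * P1)) (at x0 within X)"
    proof -
      have e: "(\<lambda>tx. tx * P1) = (*) P1" by (rule ext) simp
      show ?thesis using dx unfolding e has_field_derivative_def by (rule has_derivative_at_withinI)
    qed
    show "((\<lambda>y. f (x, y)) has_derivative blinfun_apply (fy x y)) (at y within Y)"
      if "x \<in> X" "y \<in> Y" for x y
    proof -
      obtain z w where y: "y = (z, w)" by (cases y)
      have xU: "(x, z, w) \<in> U" using XY that y by auto
      define V where "V = {q. (x, q) \<in> U}"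
      have oV: "open V" unfolding V_def
        by (rule open_vimage[OF U(1), of "\<lambda>q. (x, q)", unfolded vimage_def]) (auto intro!: continuous_intros)
      have "((\<lambda>q. f (x, q)) has_derivative (\<lambda>(b, c). b * P2 (x, z, w) + c * (\<lambda>q. P3 (x, q)) (z, w))) (at (z, w))"
      proof (rule D2)
        show "((\<lambda>s. f (x, s, w)) has_real_derivative P2 (x, z, w)) (at z)" using dz[OF xU] .
        show "open V" by fact
        show "(z, w) \<in> V" using xU by (simp add: V_def)
        show "((\<lambda>s. f (x, a, s)) has_real_derivative P3 (x, a, b)) (at b)" if "(a, b) \<in> V" for a b
          using dw that by (simp add: V_def)
        show "continuous_on V (\<lambda>q. P3 (x, q))"
          by (rule continuous_on_compose2[OF c3]) (auto simp: V_def intro!: continuous_intros)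
      qed
      moreover have "blinfun_apply (fy x y) = (\<lambda>(b, c). b * P2 (x, z, w) + c * (\<lambda>q. P3 (x, q)) (z, w))"
        by (rule ext) (auto simp: fy_def y blinfun.add_left mult.commute)
      ultimately show ?thesis using y by (auto intro: has_derivative_at_withinI)
    qed
    have "continuous (at (x0, z0, w0) within X \<times> Y) P2" "continuous (at (x0, z0, w0) within X \<times> Y) P3"
      using c2 c3 U continuous_on_eq_continuous_at continuous_at_imp_continuous_at_within by blast+
    then show "continuous (at (x0, z0, w0) within X \<times> Y) (\<lambda>(x, y). fy x y)"
      unfolding fy_def by (auto intro!: continuous_intros simp: case_prod_beta')
    show "(z0, w0) \<in> Y" using r by (simp add: Y_def)
    show "convex Y" by (simp add: Y_def)
  qed
  moreover have "(\<lambda>(tx, ty). tx * P1 + fy x0 (z0, w0) ty) = (\<lambda>(a, b, c). a * P1 + b * P2 (x0, z0, w0) + c * P3 (x0, z0, w0))"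
    by (rule ext) (auto simp: fy_def blinfun.add_left mult.commute)
  ultimately show ?thesis
    using at_within_open[OF inXY oXY] by (simp add: case_prod_beta')
qed

lemma PD:
  fixes f :: "'a::euclidean_space \<Rightarrow> real"
  assumes "(\<lambda>t. f (p + t *\<^sub>R v)) differentiable (at 0)"
  shows "((\<lambda>s. f (p + (s - a) *\<^sub>R v)) has_real_derivative pd f v p) (at a)"
proof -
  have "((\<lambda>t. f (p + t *\<^sub>R v)) has_real_derivative pd f v p) (at (a - a))"
    using assms unfolding pd_def by (simp add: DERIV_deriv_iff_real_differentiable)
  then have d: "((\<lambda>t. f (p + t *\<^sub>R v)) has_real_derivative pd f v p) (at ((\<lambda>s. s - a) a))" by simp
  have "((\<lambda>s. s - a) has_real_derivative 1) (at a)" by (auto intro!: derivative_eq_intros)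
  from DERIV_chain[OF d this] show ?thesis by (simp add: o_def)
qed

lemma C2_deriv3:
  fixes f :: "real \<times> real \<times> real \<Rightarrow> real"
  assumes "C2_on S f"
  shows "\<exists>U. open U \<and> S \<subseteq> U \<and> (\<forall>p\<in>U. (f has_derivative
     (\<lambda>(a, b, c). a * pd f (1,0,0) p + b * pd f (0,1,0) p + c * pd f (0,0,1) p)) (at p))"
proof -
  obtain U where U: "open U" "S \<subseteq> U" and
    H: "\<forall>v\<in>Basis. (\<forall>p\<in>U. (\<lambda>t. f (p + t *\<^sub>R v)) differentiable (at 0)) \<and> continuous_on U (pd f v)"
    using assms unfolding C2_on_def by blast
  have B: "(1::real,0::real,0::real) \<in> Basis" "(0::real,1::real,0::real) \<in> Basis" "(0::real,0::real,1::real) \<in> Basis"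
    by (auto simp: Basis_prod_def zero_prod_def)
  have "(f has_derivative (\<lambda>(a, b, c). a * pd f (1,0,0) (x0,z0,w0) + b * pd f (0,1,0) (x0,z0,w0) + c * pd f (0,0,1) (x0,z0,w0))) (at (x0,z0,w0))"
    if p: "(x0, z0, w0) \<in> U" for x0 z0 w0
  proof (rule D3[OF U(1) p])
    show "((\<lambda>s. f (s, z0, w0)) has_real_derivative pd f (1, 0, 0) (x0, z0, w0)) (at x0)"
      using PD[of f "(x0,z0,w0)" "(1,0,0)" x0, OF bspec[OF conjunct1[OF bspec[OF H]]]] B p by (simp add: zero_prod_def)
    show "((\<lambda>s. f (x, s, w)) has_real_derivative pd f (0, 1, 0) (x, z, w)) (at z)" if "(x, z, w) \<in> U" for x z w
      using PD[of f "(x,z,w)" "(0,1,0)" z, OF bspec[OF conjunct1[OF bspec[OF H]]]] B that by (simp add: zero_prod_def)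
    show "((\<lambda>s. f (x, z, s)) has_real_derivative pd f (0, 0, 1) (x, z, w)) (at w)" if "(x, z, w) \<in> U" for x z w
      using PD[of f "(x,z,w)" "(0,0,1)" w, OF bspec[OF conjunct1[OF bspec[OF H]]]] B that by (simp add: zero_prod_def)
    show "continuous_on U (pd f (0, 1, 0))" "continuous_on U (pd f (0, 0, 1))" using H B by auto
  qed
  then show ?thesis using U by (intro exI[of _ U]) auto
qed

lemma C2_cont2:
  fixes f :: "real \<times> real \<Rightarrow> real"
  assumes "C2_on S f"
  shows "continuous_on S f"
proof -
  obtain U where U: "open U" "S \<subseteq> U" and
    H: "\<forall>v\<in>Basis. (\<forall>p\<in>U. (\<lambda>t. f (p + t *\<^sub>R v)) differentiable (at 0)) \<and> continuous_on U (pd f v)"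
    using assms unfolding C2_on_def by blast
  have B: "(1::real,0::real) \<in> Basis" "(0::real,1::real) \<in> Basis"
    by (auto simp: Basis_prod_def zero_prod_def)
  have "isCont f (z0, w0)" if p: "(z0, w0) \<in> U" for z0 w0
  proof -
    have "(f has_derivative (\<lambda>(b, c). b * pd f (1,0) (z0,w0) + c * pd f (0,1) (z0,w0))) (at (z0, w0))"
    proof (rule D2[OF _ U(1) p])
      show "((\<lambda>s. f (s, w0)) has_real_derivative pd f (1, 0) (z0, w0)) (at z0)"
        using PD[of f "(z0,w0)" "(1,0)" z0, OF bspec[OF conjunct1[OF bspec[OF H]]]] B p by (simp add: zero_prod_def)
      show "((\<lambda>s. f (z, s)) has_real_derivative pd f (0, 1) (z, w)) (at w)" if "(z, w) \<in> U" for z w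
        using PD[of f "(z,w)" "(0,1)" w, OF bspec[OF conjunct1[OF bspec[OF H]]]] B that by (simp add: zero_prod_def)
      show "continuous_on U (pd f (0, 1))" using H B by auto
    qed
    then show ?thesis using has_derivative_continuous by blast
  qed
  then show ?thesis using U by (metis continuous_at_imp_continuous_on subsetD surj_pair)
qed




lemma S0bar_props:
  assumes "S0bar L H u" "L > 0"
  shows "\<exists>u'. (\<forall>x\<in>{-L..L}. (u has_real_derivative u' x) (at x within {-L..L})) \<and>
     continuous_on {-L..L} u' \<and> (\<forall>x\<in>{-L..L}. u x \<ge> -H)"
proof -
  obtain u' g where d: "\<forall>x\<in>{-L..L}. (u has_real_derivative u' x) (at x within {-L..L})"
    and gm: "g \<in> borel_measurable lborel"
    and g2: "set_integrable lborel {-L..L} (\<lambda>x. (g x)\<^sup>2)"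
    and u'eq: "\<forall>x\<in>{-L..L}. u' x = u' (-L) + (LBINT t=-L..x. g t)"
    and uH: "\<forall>x\<in>{-L..L}. u x \<ge> -H"
    using assms(1) unfolding S0bar_def by metis
  have one: "set_integrable lborel {-L..L} (\<lambda>x. 1::real)"
    by (rule borel_integrable_atLeastAtMost') simp
  have gi: "set_integrable lborel {-L..L} g"
  proof (rule set_integrable_bound[OF set_integral_add(1)[OF one g2]])
    show "set_borel_measurable lborel {-L..L} g" using gm unfolding set_borel_measurable_def by (intro borel_measurable_scaleR borel_measurable_indicator) auto
    show "AE x in lborel. x \<in> {-L..L} \<longrightarrow> norm (g x) \<le> norm (1 + (g x)\<^sup>2)"
    proof (intro AE_I2 impI)
      fix x
      have "\<bar>g x\<bar> \<le> 1 + (g x)\<^sup>2"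
      proof (cases "\<bar>g x\<bar> \<le> 1")
        case True
        moreover have "0 \<le> (g x)\<^sup>2" by simp
        ultimately show ?thesis by linarith
      next
        case False
        then have "1 * \<bar>g x\<bar> \<le> \<bar>g x\<bar> * \<bar>g x\<bar>" by (intro mult_right_mono) auto
        moreover have "(g x)\<^sup>2 = \<bar>g x\<bar> * \<bar>g x\<bar>" by (simp add: power2_eq_square)
        ultimately show ?thesis by linarith
      qed
      then show "norm (g x) \<le> norm (1 + (g x)\<^sup>2)" by simp
    qed
  qed
  have gI: "g integrable_on {-L..L}" using set_borel_integral_eq_integral(1)[OF gi] .
  have eq: "u' x = u' (-L) + integral {-L..x} g" if "x \<in> {-L..L}" for x
  proof -
    have sub: "{-L..x} \<subseteq> {-L..L}" using that by auto
    have si: "set_integrable lborel {-L..x} g"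
      using set_integrable_subset[OF gi _ sub] by simp
    have lx: "-L \<le> x" using that by simp
    have "(LBINT t=-L..x. g t) = (LBINT t:{-L..x}. g t)" by (rule interval_integral_Icc[OF lx])
    also have "\<dots> = integral {-L..x} g" by (rule set_borel_integral_eq_integral(2)[OF si])
    finally have "(LBINT t=-L..x. g t) = integral {-L..x} g" .
    moreover have "u' x = u' (-L) + (LBINT t=-L..x. g t)" using u'eq that by blast
    ultimately show ?thesis by linarith
  qed
  have "continuous_on {-L..L} (\<lambda>x. u' (-L) + integral {-L..x} g)"
    by (rule continuous_on_add[OF continuous_on_const indefinite_integral_continuous_1[OF gI]])
  then have "continuous_on {-L..L} u'"
    by (rule continuous_on_eq) (use eq in metis)
  then show ?thesis using d uH by blast
qed



lemma sq_bounds: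
  fixes P1 P2 P3 v A B :: real
  assumes "\<bar>P1\<bar> + \<bar>P2\<bar> \<le> sqrt A" "\<bar>P3\<bar> \<le> sqrt B" "0 \<le> A" "0 \<le> B"
  shows "(P1 + v * P3)\<^sup>2 \<le> 2 * P1\<^sup>2 + 2 * v\<^sup>2 * B" "2 * P1\<^sup>2 + P2\<^sup>2 \<le> 2 * A"
proof -
  have e: "(P1 + v * P3)\<^sup>2 + (P1 - v * P3)\<^sup>2 = 2 * P1\<^sup>2 + 2 * (v\<^sup>2 * P3\<^sup>2)"
    by (simp add: power2_eq_square algebra_simps)
  have "P3\<^sup>2 \<le> B"
  proof -
    have "\<bar>P3\<bar>\<^sup>2 \<le> (sqrt B)\<^sup>2" by (rule power_mono[OF assms(2)]) simp
    then show ?thesis using assms(4) by simp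
  qed
  then have "v\<^sup>2 * P3\<^sup>2 \<le> v\<^sup>2 * B" by (rule mult_left_mono) simp
  moreover have "0 \<le> (P1 - v * P3)\<^sup>2" by simp
  ultimately show "(P1 + v * P3)\<^sup>2 \<le> 2 * P1\<^sup>2 + 2 * v\<^sup>2 * B" using e by linarith
  have "(\<bar>P1\<bar> + \<bar>P2\<bar>)\<^sup>2 \<le> (sqrt A)\<^sup>2" by (rule power_mono[OF assms(1)]) simp
  then have a: "(\<bar>P1\<bar> + \<bar>P2\<bar>)\<^sup>2 \<le> A" using assms(3) by simp
  have "(\<bar>P1\<bar> + \<bar>P2\<bar>)\<^sup>2 = P1\<^sup>2 + P2\<^sup>2 + 2 * \<bar>P1\<bar> * \<bar>P2\<bar>" by (simp add: power2_sum)
  moreover have "0 \<le> 2 * \<bar>P1\<bar> * \<bar>P2\<bar>" by simp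
  moreover have "0 \<le> P2\<^sup>2" by simp
  ultimately show "2 * P1\<^sup>2 + P2\<^sup>2 \<le> 2 * A" using a by linarith
qed

lemma bound_up:
  fixes P1 P2 P3 v A B :: real
  assumes "\<bar>P1\<bar> + \<bar>P2\<bar> \<le> sqrt A" "\<bar>P3\<bar> \<le> sqrt B" "0 \<le> A" "0 \<le> B"
  shows "(P1 + v * P3)\<^sup>2 + P2\<^sup>2 \<le> 2 * A + 2 * v\<^sup>2 * B"
  using sq_bounds(1)[OF assms, of v] sq_bounds(2)[OF assms] by linarith

lemma bound_low:
  fixes Q1 Q2 Q3 v A B s S \<delta> :: real
  assumes "\<bar>Q1\<bar> + \<bar>Q2\<bar> \<le> sqrt A" "\<bar>Q3\<bar> \<le> sqrt B" "0 \<le> A" "0 \<le> B"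
    and d: "0 < \<delta>" "\<delta> < 1" and s: "0 < s" "s \<le> S"
  shows "\<delta> * s * ((Q1 + v * Q3)\<^sup>2 + (Q2/\<delta>)\<^sup>2) \<le> S * (2 * A + 2 * v\<^sup>2 * B) / \<delta>"
proof -
  note b = sq_bounds(1)[OF assms(1-4), of v] sq_bounds(2)[OF assms(1-4)]
  define X where "X = (Q1 + v * Q3)\<^sup>2"
  have X0: "0 \<le> X" by (simp add: X_def)
  have c: "\<delta> * ((Q1 + v * Q3)\<^sup>2 + (Q2/\<delta>)\<^sup>2) = \<delta> * X + Q2\<^sup>2/\<delta>"
    using d by (simp add: X_def field_simps power2_eq_square)
  have "\<delta> * \<delta> \<le> 1" using d by (intro mult_le_one) auto
  then have "\<delta> * X * \<delta> \<le> X" using X0 by (metis mult.commute mult.left_commute mult_le_cancel_left1 mult_right_mono mult.right_neutral order_refl) 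
  then have dX: "\<delta> * X \<le> X / \<delta>" using d by (simp add: field_simps)
  have "\<delta> * X + Q2\<^sup>2/\<delta> \<le> X/\<delta> + Q2\<^sup>2/\<delta>" using dX by simp
  also have "\<dots> = (X + Q2\<^sup>2)/\<delta>" by (simp add: add_divide_distrib)
  also have "\<dots> \<le> (2 * A + 2 * v\<^sup>2 * B)/\<delta>"
    by (rule divide_right_mono) (use b d in \<open>auto simp: X_def\<close>)
  finally have T: "\<delta> * ((Q1 + v * Q3)\<^sup>2 + (Q2/\<delta>)\<^sup>2) \<le> (2 * A + 2 * v\<^sup>2 * B)/\<delta>" using c by simp
  have T0: "0 \<le> \<delta> * ((Q1 + v * Q3)\<^sup>2 + (Q2/\<delta>)\<^sup>2)" using d by simp
  have "\<delta> * s * ((Q1 + v * Q3)\<^sup>2 + (Q2/\<delta>)\<^sup>2) = s * (\<delta> * ((Q1 + v * Q3)\<^sup>2 + (Q2/\<delta>)\<^sup>2))" by simp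
  also have "\<dots> \<le> S * (\<delta> * ((Q1 + v * Q3)\<^sup>2 + (Q2/\<delta>)\<^sup>2))" by (rule mult_right_mono[OF s(2) T0])
  also have "\<dots> \<le> S * ((2 * A + 2 * v\<^sup>2 * B)/\<delta>)" by (rule mult_left_mono[OF T]) (use s in simp)
  finally show ?thesis by simp
qed

lemma grad_up:
  fixes h hb :: "real \<times> real \<times> real \<Rightarrow> real"
  assumes hd: "(h has_derivative (\<lambda>(a,b,c). a * P1 + b * P2 + c * P3)) (at (x, z, u x))"
    and ud: "(u has_real_derivative v) (at x)"
    and zH: "z > -H"
  shows "grad_sq (\<lambda>q. h_delta H \<delta> hb h (fst q) (snd q) (u (fst q))) (x, z) = (P1 + v * P3)\<^sup>2 + P2\<^sup>2"
proof -
  let ?\<psi> = "\<lambda>q::real\<times>real. (fst q, snd q, u (fst q))"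
  have pd: "(?\<psi> has_derivative (\<lambda>q. (fst q, snd q, fst q * v))) (at (x, z))"
    by (auto intro!: derivative_eq_intros DERIV_compose_FDERIV[where f=u] ud)
  have "((h \<circ> ?\<psi>) has_derivative ((\<lambda>(a,b,c). a * P1 + b * P2 + c * P3) \<circ> (\<lambda>q. (fst q, snd q, fst q * v)))) (at (x, z))"
    by (rule diff_chain_at[OF pd]) (simp add: hd)
  then have "((\<lambda>q. h_delta H \<delta> hb h (fst q) (snd q) (u (fst q))) has_derivative
      ((\<lambda>(a,b,c). a * P1 + b * P2 + c * P3) \<circ> (\<lambda>q. (fst q, snd q, fst q * v)))) (at (x, z))"
  proof (rule has_derivative_transform_within_open)
    show "open {q::real\<times>real. -H < snd q}" by (intro open_Collect_less continuous_intros)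
    show "(x, z) \<in> {q. -H < snd q}" using zH by simp
  qed (auto simp: h_delta_def)
  from frechet_derivative_at[OF this, symmetric] show ?thesis
    unfolding grad_sq_def by (simp add: algebra_simps)
qed

lemma grad_low:
  fixes h hb :: "real \<times> real \<times> real \<Rightarrow> real"
  assumes hd: "(hb has_derivative (\<lambda>(a,b,c). a * Q1 + b * Q2 + c * Q3)) (at (x, -H + (z + H) / \<delta>, u x))"
    and ud: "(u has_real_derivative v) (at x)"
    and zH: "z < -H" and dne: "\<delta> \<noteq> 0"
  shows "grad_sq (\<lambda>q. h_delta H \<delta> hb h (fst q) (snd q) (u (fst q))) (x, z) = (Q1 + v * Q3)\<^sup>2 + (Q2/\<delta>)\<^sup>2"
proof -
  let ?\<psi> = "\<lambda>q::real\<times>real. (fst q, -H + (snd q + H) / \<delta>, u (fst q))"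
  have pd: "(?\<psi> has_derivative (\<lambda>q. (fst q, snd q / \<delta>, fst q * v))) (at (x, z))"
    by (auto intro!: derivative_eq_intros DERIV_compose_FDERIV[where f=u] ud simp: dne)
  have "((hb \<circ> ?\<psi>) has_derivative ((\<lambda>(a,b,c). a * Q1 + b * Q2 + c * Q3) \<circ> (\<lambda>q. (fst q, snd q / \<delta>, fst q * v)))) (at (x, z))"
    by (rule diff_chain_at[OF pd]) (use hd in simp)
  then have "((\<lambda>q. h_delta H \<delta> hb h (fst q) (snd q) (u (fst q))) has_derivative
      ((\<lambda>(a,b,c). a * Q1 + b * Q2 + c * Q3) \<circ> (\<lambda>q. (fst q, snd q / \<delta>, fst q * v)))) (at (x, z))"
  proof (rule has_derivative_transform_within_open)
    show "open {q::real\<times>real. snd q < -H}" by (intro open_Collect_less continuous_intros)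
    show "(x, z) \<in> {q. snd q < -H}" using zH by simp
  qed (auto simp: h_delta_def)
  from frechet_derivative_at[OF this, symmetric] show ?thesis
    unfolding grad_sq_def by (simp add: algebra_simps)
qed



lemma inner_int:
  fixes K1 K2 a b c d :: real
  assumes "K1 \<ge> 0" "K2 \<ge> 0" "a \<le> b" "c \<le> d"
  shows "(\<integral>\<^sup>+z. ennreal (K1 * indicator {a<..<b} z + K2 * indicator {c<..<d} z) \<partial>lborel)
     = ennreal (K1 * (b - a) + K2 * (d - c))"
proof -
  have pt: "ennreal (K1 * indicator {a<..<b} z + K2 * indicator {c<..<d} z)
      = ennreal K1 * indicator {a<..<b} z + ennreal K2 * indicator {c<..<d} z" for z
  proof -
    have "ennreal (K1 * indicator {a<..<b} z + K2 * indicator {c<..<d} z)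
        = ennreal (K1 * indicator {a<..<b} z) + ennreal (K2 * indicator {c<..<d} z)"
      by (rule ennreal_plus) (use assms in auto)
    moreover have "ennreal (K1 * indicator {a<..<b} z) = ennreal K1 * indicator {a<..<b} z"
      by (cases "z \<in> {a<..<b}") auto
    moreover have "ennreal (K2 * indicator {c<..<d} z) = ennreal K2 * indicator {c<..<d} z"
      by (cases "z \<in> {c<..<d}") auto
    ultimately show ?thesis by simp
  qed
  have "(\<integral>\<^sup>+z. ennreal (K1 * indicator {a<..<b} z + K2 * indicator {c<..<d} z) \<partial>lborel)
      = (\<integral>\<^sup>+z. ennreal K1 * indicator {a<..<b} z + ennreal K2 * indicator {c<..<d} z \<partial>lborel)"
    by (simp only: pt)
  also have "\<dots> = (\<integral>\<^sup>+z. ennreal K1 * indicator {a<..<b} z \<partial>lborel) + (\<integral>\<^sup>+z. ennreal K2 * indicator {c<..<d} z \<partial>lborel)"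
    by (rule nn_integral_add) auto
  also have "\<dots> = ennreal K1 * ennreal (b - a) + ennreal K2 * ennreal (d - c)"
    using assms by (simp only: nn_integral_cmult_indicator sets_lborel borel_open open_greaterThanLessThan emeasure_lborel_Ioo)
  also have "\<dots> = ennreal (K1 * (b - a)) + ennreal (K2 * (d - c))"
    using assms by (simp only: ennreal_mult[symmetric] diff_ge_0_iff_ge)
  also have "\<dots> = ennreal (K1 * (b - a) + K2 * (d - c))"
    by (rule ennreal_plus[symmetric]) (use assms in auto)
  finally show ?thesis .
qed



lemma tonelli_step:
  fixes g :: "real \<times> real \<Rightarrow> real"
  assumes "g \<in> borel_measurable borel"
  shows "(\<integral>\<^sup>+p. ennreal (g p) \<partial>lborel) = (\<integral>\<^sup>+x. \<integral>\<^sup>+z. ennreal (g (x, z)) \<partial>lborel \<partial>lborel)"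
proof -
  have "(\<lambda>p. ennreal (g p)) \<in> borel_measurable (lborel \<Otimes>\<^sub>M lborel)"
    using assms by (simp add: lborel_prod)
  from lborel.nn_integral_fst[OF this] show ?thesis by (simp add: lborel_prod)
qed



lemma outer_step:
  fixes f :: "real \<Rightarrow> real"
  assumes "continuous_on UNIV f" "\<And>x. f x \<ge> 0"
  shows "(\<integral>\<^sup>+x. ennreal (indicator {a..b} x * f x) \<partial>lborel) = ennreal (integral {a..b} f)"
proof (rule nn_integral_has_integral_lborel)
  show "(\<lambda>x. indicator {a..b} x * f x) \<in> borel_measurable borel"
    using borel_measurable_continuous_onI[OF assms(1)] by measurable
  show "0 \<le> indicator {a..b} x * f x" for x using assms(2) by simp
  have "f integrable_on {a..b}"
    by (rule integrable_continuous_interval) (rule continuous_on_subset[OF assms(1)], simp)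
  then have "(f has_integral integral {a..b} f) {a..b}" by (rule integrable_integral)
  then have "((\<lambda>x. if x \<in> {a..b} then f x else 0) has_integral integral {a..b} f) UNIV"
    by (simp only: has_integral_restrict_UNIV)
  then show "((\<lambda>x. indicator {a..b} x * f x) has_integral integral {a..b} f) UNIV"
    by (rule has_integral_eq[rotated]) (simp add: indicator_def)
qed



lemma null_line:
  "{p::real\<times>real. snd p = c} \<in> null_sets lborel"
proof -
  have "{p::real\<times>real. snd p = c} = UNIV \<times> {c}" by auto
  moreover have "emeasure (lborel \<Otimes>\<^sub>M lborel) (UNIV \<times> {c::real}) = (0::ennreal)"
    by (subst lborel.emeasure_pair_measure_Times) auto
  ultimately show ?thesis by (auto simp: null_sets_def lborel_prod[symmetric])
qed





theorem lemma3p1: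
  fixes m L smax :: real
  assumes "m > 0" and "L > 0"
  shows "\<exists>c0 > 0. \<forall>(H::real) (\<sigma>::real \<times> real \<Rightarrow> real)
            (hb::real \<times> real \<times> real \<Rightarrow> real) (h::real \<times> real \<times> real \<Rightarrow> real) (K::real)
            (u::real \<Rightarrow> real) (\<delta>::real).
     H > 0 \<longrightarrow>
     C2_on ({-L..L} \<times> {-H-1..-H}) \<sigma> \<longrightarrow>
     (\<forall>p\<in>{-L..L} \<times> {-H-1..-H}. \<sigma> p > 0) \<longrightarrow>
     smax = 1 + Sup (\<sigma> ` ({-L..L} \<times> {-H-1..-H})) \<longrightarrow>
     C2_on ({-L..L} \<times> {-H-1..-H} \<times> {-H..}) hb \<longrightarrow>
     C2_on ({-L..L} \<times> {-H..} \<times> {-H..}) h \<longrightarrow>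
     (\<forall>x\<in>{-L..L}. \<forall>w\<ge>-H. hb (x, -H, w) = h (x, -H, w)) \<longrightarrow>
     (\<forall>x\<in>{-L..L}. \<forall>w\<ge>-H. \<sigma> (x, -H) * pd hb (0, 1, 0) (x, -H, w) = pd h (0, 1, 0) (x, -H, w)) \<longrightarrow>
     (\<forall>x\<in>{-L..L}. \<forall>w\<ge>-H. pd hb (0, 0, 1) (x, -H-1, w) = 0) \<longrightarrow>
     (\<forall>x\<in>{-L..L}. \<forall>z\<in>{-H-1..-H}. \<forall>w\<ge>-H.
        \<bar>pd hb (1, 0, 0) (x, z, w)\<bar> + \<bar>pd hb (0, 1, 0) (x, z, w)\<bar> \<le> sqrt (m * (1 + w\<^sup>2)) \<and>
        \<bar>pd hb (0, 0, 1) (x, z, w)\<bar> \<le> sqrt m) \<longrightarrow>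
     (\<forall>x\<in>{-L..L}. \<forall>z\<ge>-H. \<forall>w>-H.
        \<bar>pd h (1, 0, 0) (x, z, w)\<bar> + \<bar>pd h (0, 1, 0) (x, z, w)\<bar> \<le> sqrt (m * (1 + w\<^sup>2) / (H + w)) \<and>
        \<bar>pd h (0, 0, 1) (x, z, w)\<bar> \<le> sqrt (m / (H + w))) \<longrightarrow>
     K > 0 \<longrightarrow>
     (\<forall>x\<in>{-L..L}. \<forall>w\<ge>-H.
        \<bar>pd h (1, 0, 0) (x, w, w)\<bar> + \<bar>pd h (0, 1, 0) (x, w, w) + pd h (0, 0, 1) (x, w, w)\<bar> \<le> K) \<longrightarrow>
     S0bar L H u \<longrightarrow>
     0 < \<delta> \<longrightarrow> \<delta> < 1 \<longrightarrow>
     (\<integral>\<^sup>+ p. indicator (Omega_delta L H \<delta> u) p *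
          ennreal (sigma_delta H \<delta> \<sigma> p *
                   grad_sq (\<lambda>q. h_delta H \<delta> hb h (fst q) (snd q) (u (fst q))) p) \<partial>lborel)
       \<le> ennreal (c0 * (1 + integral {-L..L} (\<lambda>x. (u x)\<^sup>2)
                          + integral {-L..L} (\<lambda>x. (deriv u x)\<^sup>2)))"
  proof -
  define c0 where "c0 = 4 * m * (1 + \<bar>smax - 1\<bar>) * (2 * L + 1)"
  have c0pos: "c0 > 0" using assms by (simp add: c0_def)
  show ?thesis
  proof (rule exI[of _ c0], intro conjI allI impI c0pos)
    fix H :: real and \<sigma> :: "real \<times> real \<Rightarrow> real" and hb h :: "real \<times> real \<times> real \<Rightarrow> real"
      and K :: real and u :: "real \<Rightarrow> real" and \<delta> :: real
    assume H0: "H > 0" and sC2: "C2_on ({-L..L} \<times> {-H-1..-H}) \<sigma>"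
      and spos: "\<forall>p\<in>{-L..L} \<times> {-H-1..-H}. \<sigma> p > 0"
      and smaxeq: "smax = 1 + Sup (\<sigma> ` ({-L..L} \<times> {-H-1..-H}))"
      and hbC2: "C2_on ({-L..L} \<times> {-H-1..-H} \<times> {-H..}) hb"
      and hC2: "C2_on ({-L..L} \<times> {-H..} \<times> {-H..}) h"
      and "\<forall>x\<in>{-L..L}. \<forall>w\<ge>-H. hb (x, -H, w) = h (x, -H, w)"
      and "\<forall>x\<in>{-L..L}. \<forall>w\<ge>-H. \<sigma> (x, -H) * pd hb (0, 1, 0) (x, -H, w) = pd h (0, 1, 0) (x, -H, w)"
      and "\<forall>x\<in>{-L..L}. \<forall>w\<ge>-H. pd hb (0, 0, 1) (x, -H-1, w) = 0"
      and hbB: "\<forall>x\<in>{-L..L}. \<forall>z\<in>{-H-1..-H}. \<forall>w\<ge>-H.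
        \<bar>pd hb (1, 0, 0) (x, z, w)\<bar> + \<bar>pd hb (0, 1, 0) (x, z, w)\<bar> \<le> sqrt (m * (1 + w\<^sup>2)) \<and>
        \<bar>pd hb (0, 0, 1) (x, z, w)\<bar> \<le> sqrt m"
      and hB: "\<forall>x\<in>{-L..L}. \<forall>z\<ge>-H. \<forall>w>-H.
        \<bar>pd h (1, 0, 0) (x, z, w)\<bar> + \<bar>pd h (0, 1, 0) (x, z, w)\<bar> \<le> sqrt (m * (1 + w\<^sup>2) / (H + w)) \<and>
        \<bar>pd h (0, 0, 1) (x, z, w)\<bar> \<le> sqrt (m / (H + w))"
      and "K > 0"
      and "\<forall>x\<in>{-L..L}. \<forall>w\<ge>-H.
        \<bar>pd h (1, 0, 0) (x, w, w)\<bar> + \<bar>pd h (0, 1, 0) (x, w, w) + pd h (0, 0, 1) (x, w, w)\<bar> \<le> K"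
      and uS: "S0bar L H u" and d0: "0 < \<delta>" and d1: "\<delta> < 1"
    obtain u' where du: "\<forall>x\<in>{-L..L}. (u has_real_derivative u' x) (at x within {-L..L})"
      and cu': "continuous_on {-L..L} u'" and uH: "\<forall>x\<in>{-L..L}. u x \<ge> -H"
      using S0bar_props[OF uS assms(2)] by blast
    have cu: "continuous_on {-L..L} u" by (rule DERIV_continuous_on) (use du in blast)
    have duat: "(u has_real_derivative u' x) (at x)" if "-L < x" "x < L" for x
    proof -
      have "at x within {-L..L} = at x" by (rule at_within_interior) (use that in simp)
      then show ?thesis using du that by (metis atLeastAtMost_iff less_imp_le)
    qed
    define cl where "cl = (\<lambda>x::real. max (-L) (min L x))"
    have ccl: "continuous_on UNIV cl" unfolding cl_def by (intro continuous_intros)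
    have clin: "cl x \<in> {-L..L}" for x using assms(2) by (auto simp: cl_def)
    have clid: "cl x = x" if "x \<in> {-L..L}" for x using that by (auto simp: cl_def)
    define uc where "uc = (\<lambda>x. u (cl x))"
    define vc where "vc = (\<lambda>x. u' (cl x))"
    have cuc: "continuous_on UNIV uc" unfolding uc_def
      by (rule continuous_on_compose2[OF cu ccl]) (use clin in auto)
    have cvc: "continuous_on UNIV vc" unfolding vc_def
      by (rule continuous_on_compose2[OF cu' ccl]) (use clin in auto)
    have ucH: "uc x \<ge> -H" for x using uH clin by (simp add: uc_def)
    define Sg where "Sg = {-L..L} \<times> {-H-1..-H}"
    define Sm where "Sm = smax - 1"
    have cs: "continuous_on Sg \<sigma>" unfolding Sg_def by (rule C2_cont2[OF sC2])
    have cpt: "compact Sg" unfolding Sg_def by (intro compact_Times compact_Icc)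
    have bdd: "bdd_above (\<sigma> ` Sg)"
      by (rule bounded_imp_bdd_above[OF compact_imp_bounded[OF compact_continuous_image[OF cs cpt]]])
    have sle: "\<sigma> p \<le> Sm" if "p \<in> Sg" for p
    proof -
      have "\<sigma> p \<le> Sup (\<sigma> ` Sg)" by (rule cSup_upper[OF imageI[OF that] bdd])
      moreover have "Sm = Sup (\<sigma> ` Sg)" unfolding Sm_def smaxeq Sg_def by simp
      ultimately show ?thesis by simp
    qed
    have Sm0: "Sm \<ge> 0"
    proof -
      have mem: "(-L, -H) \<in> {-L..L} \<times> {-H-1..-H}" using assms(2) by auto
      then have "\<sigma> (-L, -H) > 0" using spos by blast
      moreover have "\<sigma> (-L, -H) \<le> Sm" by (rule sle) (use mem in \<open>simp only: Sg_def\<close>)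
      ultimately show ?thesis by linarith
    qed
    define C where "C = 2 * m * (1 + Sm)"
    have C2m: "2 * m \<le> C" "2 * m * Sm \<le> C" "C \<ge> 0" 
    proof -
      have "0 \<le> 2 * m * Sm" using Sm0 assms(1) by simp
      moreover have "C = 2 * m + 2 * m * Sm" unfolding C_def by (simp add: distrib_left)
      ultimately show "2 * m \<le> C" "2 * m * Sm \<le> C" "C \<ge> 0" using assms(1) by linarith+
    qed
    define aa where "aa = (\<lambda>x. 1 + (uc x)\<^sup>2 + (vc x)\<^sup>2)"
    have aa0: "aa x \<ge> 1" for x by (simp add: aa_def)
    have aa0': "0 \<le> aa x" for x using aa0[of x] by linarith
    have caa: "continuous_on UNIV aa" unfolding aa_def using cuc cvc by (intro continuous_intros)
    define g where "g = (\<lambda>p::real\<times>real. indicator {-L..L} (fst p) *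
        (C * aa (fst p) / (H + uc (fst p)) * indicator {-H<..<uc (fst p)} (snd p)
         + C * aa (fst p) / \<delta> * indicator {-H-\<delta><..<-H} (snd p)))"
    let ?F = "\<lambda>q. h_delta H \<delta> hb h (fst q) (snd q) (u (fst q))"
    have pw: "indicator (Omega_delta L H \<delta> u) p * ennreal (sigma_delta H \<delta> \<sigma> p * grad_sq ?F p) \<le> ennreal (g p)"
      if "snd p \<noteq> -H" for p
    proof -
      obtain x z where p: "p = (x, z)" by (cases p)
      have zH: "z \<noteq> -H" using that p by simp
      show ?thesis
      proof (cases "p \<in> Omega_delta L H \<delta> u")
        case False then show ?thesis by simp
      next
        case True
        then have xL: "-L < x" "x < L" and zl: "-H-\<delta> < z" and zu: "z < u x" by (auto simp: p Omega_delta_def)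
        have xI: "x \<in> {-L..L}" using xL by simp
        have ud: "(u has_real_derivative u' x) (at x)" by (rule duat[OF xL])
        have ucx: "uc x = u x" "vc x = u' x" using xI by (simp_all add: uc_def vc_def clid)
        have aax: "aa x = 1 + (u x)\<^sup>2 + (u' x)\<^sup>2" by (simp add: aa_def ucx)
        have gle: "sigma_delta H \<delta> \<sigma> p * grad_sq ?F p \<le> g p"
        proof (cases "z > -H")
          case zgt: True
          obtain Uh where Uh: "open Uh" "{-L..L} \<times> {-H..} \<times> {-H..} \<subseteq> Uh"
            and dh: "\<forall>q\<in>Uh. (h has_derivative (\<lambda>(a, b, c). a * pd h (1,0,0) q + b * pd h (0,1,0) q + c * pd h (0,0,1) q)) (at q)"
            using C2_deriv3[OF hC2] by blast
          define w where "w = u x"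
          have wH: "w > -H" using zgt zu by (simp add: w_def)
          have Hw: "H + w > 0" using wH by simp
          have "(x, z, u x) \<in> Uh" using Uh(2) xI zgt wH by (auto simp: w_def)
          then have hd: "(h has_derivative (\<lambda>(a, b, c). a * pd h (1,0,0) (x, z, u x) + b * pd h (0,1,0) (x, z, u x) + c * pd h (0,0,1) (x, z, u x))) (at (x, z, u x))"
            using dh by blast
          have gr: "grad_sq ?F (x, z) = (pd h (1,0,0) (x, z, u x) + u' x * pd h (0,0,1) (x, z, u x))\<^sup>2 + (pd h (0,1,0) (x, z, u x))\<^sup>2"
            by (rule grad_up[OF hd ud zgt])
          have hBx: "\<bar>pd h (1, 0, 0) (x, z, w)\<bar> + \<bar>pd h (0, 1, 0) (x, z, w)\<bar> \<le> sqrt (m * (1 + w\<^sup>2) / (H + w))"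
              "\<bar>pd h (0, 0, 1) (x, z, w)\<bar> \<le> sqrt (m / (H + w))"
            using hB xI zgt wH by auto
          have A0: "0 \<le> m * (1 + w\<^sup>2) / (H + w)" "0 \<le> m / (H + w)" using assms(1) Hw by auto
          have "grad_sq ?F (x, z) \<le> 2 * (m * (1 + w\<^sup>2) / (H + w)) + 2 * (u' x)\<^sup>2 * (m / (H + w))"
            unfolding gr w_def[symmetric] by (rule bound_up[OF hBx A0])
          also have "\<dots> = 2 * m * (1 + w\<^sup>2 + (u' x)\<^sup>2) / (H + w)"
            by (simp add: add_divide_distrib[symmetric] algebra_simps)
          also have "\<dots> \<le> C * (1 + w\<^sup>2 + (u' x)\<^sup>2) / (H + w)"
            by (rule divide_right_mono[OF mult_right_mono[OF C2m(1)]]) (use Hw in auto)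
          finally have G: "grad_sq ?F (x, z) \<le> C * aa x / (H + uc x)"
            by (simp add: aax ucx w_def)
          have sd: "sigma_delta H \<delta> \<sigma> p = 1" using zgt by (simp add: sigma_delta_def p)
          have gp: "g p = C * aa x / (H + uc x)" using zgt zu xI by (simp add: g_def p ucx)
          show ?thesis using G sd gp by (simp add: p)
        next
          case False
          then have zlt: "z < -H" using zH by simp
          obtain Ub where Ub: "open Ub" "{-L..L} \<times> {-H-1..-H} \<times> {-H..} \<subseteq> Ub"
            and db: "\<forall>q\<in>Ub. (hb has_derivative (\<lambda>(a, b, c). a * pd hb (1,0,0) q + b * pd hb (0,1,0) q + c * pd hb (0,0,1) q)) (at q)"
            using C2_deriv3[OF hbC2] by blast
          define w where "w = u x"
          define s where "s = -H + (z + H) / \<delta>"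
          have s1: "-1 < (z + H) / \<delta>" using zl d0 by (simp add: field_simps)
          have s2: "(z + H) / \<delta> < 0" using zlt d0 by (simp add: field_simps)
          have sI: "s \<in> {-H-1..-H}" using s1 s2 by (simp add: s_def)
          have wH: "w \<ge> -H" using uH xI by (simp add: w_def)
          have "(x, s, u x) \<in> Ub" using Ub(2) xI sI wH by (auto simp: w_def)
          then have hd: "(hb has_derivative (\<lambda>(a, b, c). a * pd hb (1,0,0) (x, s, u x) + b * pd hb (0,1,0) (x, s, u x) + c * pd hb (0,0,1) (x, s, u x))) (at (x, -H + (z + H) / \<delta>, u x))"
            using db by (simp add: s_def)
          have gr: "grad_sq ?F (x, z) = (pd hb (1,0,0) (x, s, u x) + u' x * pd hb (0,0,1) (x, s, u x))\<^sup>2 + (pd hb (0,1,0) (x, s, u x) / \<delta>)\<^sup>2"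
            by (rule grad_low[OF hd ud zlt]) (use d0 in simp)
          have hBx: "\<bar>pd hb (1, 0, 0) (x, s, w)\<bar> + \<bar>pd hb (0, 1, 0) (x, s, w)\<bar> \<le> sqrt (m * (1 + w\<^sup>2))"
              "\<bar>pd hb (0, 0, 1) (x, s, w)\<bar> \<le> sqrt m"
            using hbB xI sI wH by auto
          have A0: "0 \<le> m * (1 + w\<^sup>2)" "0 \<le> m" using assms(1) by auto
          have zS: "(x, z) \<in> Sg" using xI zl zlt d1 by (auto simp: Sg_def)
          have sp: "0 < \<sigma> (x, z)" using spos zS by (auto simp: Sg_def)
          have sd: "sigma_delta H \<delta> \<sigma> p = \<delta> * \<sigma> (x, z)" using zlt by (simp add: sigma_delta_def p)
          have "sigma_delta H \<delta> \<sigma> p * grad_sq ?F p \<le> Sm * (2 * (m * (1 + w\<^sup>2)) + 2 * (u' x)\<^sup>2 * m) / \<delta>"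
            unfolding sd unfolding p gr w_def[symmetric] by (rule bound_low[OF hBx A0 d0 d1 sp sle[OF zS]])
          also have "\<dots> = 2 * m * Sm * (1 + w\<^sup>2 + (u' x)\<^sup>2) / \<delta>"
            by (simp add: algebra_simps)
          also have "\<dots> \<le> C * (1 + w\<^sup>2 + (u' x)\<^sup>2) / \<delta>"
            by (rule divide_right_mono[OF mult_right_mono[OF C2m(2)]]) (use d0 in auto)
          also have "\<dots> = g p" using zlt zl xI by (simp add: g_def p ucx aax w_def)
          finally show ?thesis .
        qed
        show ?thesis using True gle by (simp add: ennreal_leI)
      qed
    qed
    have AEb: "AE p in lborel. indicator (Omega_delta L H \<delta> u) p * ennreal (sigma_delta H \<delta> \<sigma> p * grad_sq ?F p) \<le> ennreal (g p)"
      by (rule AE_I'[OF null_line[of "-H"]]) (use pw in auto)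
    have gm: "g \<in> borel_measurable borel"
    proof -
      have [measurable]: "uc \<in> borel_measurable borel" "aa \<in> borel_measurable borel"
        using cuc caa by (auto intro: borel_measurable_continuous_onI)
      have "g = (\<lambda>p. (if -L \<le> fst p \<and> fst p \<le> L then 1 else 0) *
          (C * aa (fst p) / (H + uc (fst p)) * (if -H < snd p \<and> snd p < uc (fst p) then 1 else 0)
           + C * aa (fst p) / \<delta> * (if -H-\<delta> < snd p \<and> snd p < -H then 1 else 0)))"
        by (simp add: g_def indicator_def fun_eq_iff)
      also have "\<dots> \<in> borel_measurable (borel \<Otimes>\<^sub>M borel)" by measurable
      finally show ?thesis by (simp only: borel_prod)
    qed
    have inner: "(\<integral>\<^sup>+z. ennreal (g (x, z)) \<partial>lborel) \<le> ennreal (indicator {-L..L} x * (2 * C * aa x))" for x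
    proof (cases "x \<in> {-L..L}")
      case True
      define K1 where "K1 = C * aa x / (H + uc x)"
      define K2 where "K2 = C * aa x / \<delta>"
      have K: "K1 \<ge> 0" "K2 \<ge> 0" using C2m aa0' ucH[of x] H0 d0 by (auto simp: K1_def K2_def)
      have "g (x, z) = K1 * indicator {-H<..<uc x} z + K2 * indicator {-H-\<delta><..<-H} z" for z
        using True by (simp add: g_def K1_def K2_def)
      then have "(\<integral>\<^sup>+z. ennreal (g (x, z)) \<partial>lborel) = ennreal (K1 * (uc x - -H) + K2 * (-H - (-H-\<delta>)))"
        using inner_int[OF K, of "-H" "uc x" "-H-\<delta>" "-H"] ucH[of x] d0 by simp
      also have "\<dots> \<le> ennreal (indicator {-L..L} x * (2 * C * aa x))"
      proof (rule ennreal_leI)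
        have a: "K1 * (uc x - -H) \<le> C * aa x"
        proof (cases "H + uc x = 0")
          case True then show ?thesis using C2m aa0' by (simp add: K1_def)
        next
          case False
          have "uc x - -H = H + uc x" by simp
          moreover have "K1 * (H + uc x) = C * aa x" using False by (simp add: K1_def)
          ultimately show ?thesis by (simp only:)
        qed
        have b: "K2 * (-H - (-H-\<delta>)) = C * aa x" using d0 by (simp add: K2_def)
        show "K1 * (uc x - -H) + K2 * (-H - (-H-\<delta>)) \<le> indicator {-L..L} x * (2 * C * aa x)"
          using a b True by simp
      qed
      finally show ?thesis .
    next
      case False
      then have "g (x, z) = 0" for z by (simp add: g_def)
      then show ?thesis by simp
    qed
    have cuc2: "continuous_on UNIV (\<lambda>x. (uc x)\<^sup>2)" using cuc by (intro continuous_intros)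
    have cvc2: "continuous_on UNIV (\<lambda>x. (vc x)\<^sup>2)" using cvc by (intro continuous_intros)
    have iuc: "(\<lambda>x. (uc x)\<^sup>2) integrable_on {-L..L}"
      by (rule integrable_continuous_interval[OF continuous_on_subset[OF cuc2 subset_UNIV]])
    have ivc: "(\<lambda>x. (vc x)\<^sup>2) integrable_on {-L..L}"
      by (rule integrable_continuous_interval[OF continuous_on_subset[OF cvc2 subset_UNIV]])
    have i1: "(\<lambda>x. 1::real) integrable_on {-L..L}" by (rule integrable_continuous_interval) (rule continuous_on_const)
    have eqU: "integral {-L..L} (\<lambda>x. (u x)\<^sup>2) = integral {-L..L} (\<lambda>x. (uc x)\<^sup>2)"
      by (rule integral_cong) (simp add: uc_def clid)
    have eqV: "integral {-L..L} (\<lambda>x. (deriv u x)\<^sup>2) = integral {-L..L} (\<lambda>x. (vc x)\<^sup>2)"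
    proof (rule integral_spike[of "{-L, L}"])
      show "negligible {-L, L}" by auto
      fix x assume x: "x \<in> {-L..L} - {-L, L}"
      then have xi: "-L < x" "x < L" by auto
      have "deriv u x = u' x" by (rule DERIV_imp_deriv[OF duat[OF xi]])
      moreover have "vc x = u' x" using x by (simp add: vc_def clid)
      ultimately show "(vc x)\<^sup>2 = (deriv u x)\<^sup>2" by simp
    qed
    have ints: "integral {-L..L} (\<lambda>x. 2 * C * aa x) = 2 * C * (2 * L + integral {-L..L} (\<lambda>x. (u x)\<^sup>2) + integral {-L..L} (\<lambda>x. (deriv u x)\<^sup>2))"
    proof -
      have "integral {-L..L} (\<lambda>x. 2 * C * aa x) = 2 * C * integral {-L..L} aa"
        by (rule integral_mult_right)
      moreover have "integral {-L..L} aa = integral {-L..L} (\<lambda>x. 1 + (uc x)\<^sup>2) + integral {-L..L} (\<lambda>x. (vc x)\<^sup>2)"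
        unfolding aa_def by (rule integral_add[OF integrable_add[OF i1 iuc] ivc])
      moreover have "integral {-L..L} (\<lambda>x. 1 + (uc x)\<^sup>2) = integral {-L..L} (\<lambda>x. 1::real) + integral {-L..L} (\<lambda>x. (uc x)\<^sup>2)"
        by (rule integral_add[OF i1 iuc])
      moreover have "integral {-L..L} (\<lambda>x. 1::real) = 2 * L" using assms(2) by simp
      ultimately show ?thesis using eqU eqV by simp
    qed
    have nn: "0 \<le> integral {-L..L} (\<lambda>x. (u x)\<^sup>2)" "0 \<le> integral {-L..L} (\<lambda>x. (deriv u x)\<^sup>2)"
      unfolding eqU eqV by (rule integral_nonneg[OF iuc], simp) (rule integral_nonneg[OF ivc], simp)
    have "(\<integral>\<^sup>+ p. indicator (Omega_delta L H \<delta> u) p * ennreal (sigma_delta H \<delta> \<sigma> p * grad_sq ?F p) \<partial>lborel)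
        \<le> (\<integral>\<^sup>+ p. ennreal (g p) \<partial>lborel)" by (rule nn_integral_mono_AE[OF AEb])
    also have "\<dots> = (\<integral>\<^sup>+x. \<integral>\<^sup>+z. ennreal (g (x, z)) \<partial>lborel \<partial>lborel)" by (rule tonelli_step[OF gm])
    also have "\<dots> \<le> (\<integral>\<^sup>+x. ennreal (indicator {-L..L} x * (2 * C * aa x)) \<partial>lborel)"
      by (rule nn_integral_mono) (rule inner)
    also have "\<dots> = ennreal (integral {-L..L} (\<lambda>x. 2 * C * aa x))"
      by (rule outer_step) (use caa C2m aa0' in \<open>auto intro!: continuous_intros mult_nonneg_nonneg\<close>)
    also have "\<dots> \<le> ennreal (c0 * (1 + integral {-L..L} (\<lambda>x. (u x)\<^sup>2) + integral {-L..L} (\<lambda>x. (deriv u x)\<^sup>2)))"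
    proof (rule ennreal_leI)
      define X where "X = integral {-L..L} (\<lambda>x. (u x)\<^sup>2) + integral {-L..L} (\<lambda>x. (deriv u x)\<^sup>2)"
      have X0: "X \<ge> 0" using nn by (simp add: X_def)
      have "2 * L + X \<le> (2 * L + 1) * (1 + X)" using X0 assms(2) by (simp add: algebra_simps)
      then have "2 * C * (2 * L + X) \<le> 2 * C * ((2 * L + 1) * (1 + X))" using C2m by (intro mult_left_mono) auto
      moreover have "c0 = 2 * C * (2 * L + 1)" using Sm0 by (simp add: c0_def C_def Sm_def)
      ultimately show "integral {-L..L} (\<lambda>x. 2 * C * aa x) \<le> c0 * (1 + integral {-L..L} (\<lambda>x. (u x)\<^sup>2) + integral {-L..L} (\<lambda>x. (deriv u x)\<^sup>2))"
        unfolding ints X_def by (simp add: algebra_simps)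
    qed
    finally show "(\<integral>\<^sup>+ p. indicator (Omega_delta L H \<delta> u) p *
          ennreal (sigma_delta H \<delta> \<sigma> p *
                   grad_sq (\<lambda>q. h_delta H \<delta> hb h (fst q) (snd q) (u (fst q))) p) \<partial>lborel)
       \<le> ennreal (c0 * (1 + integral {-L..L} (\<lambda>x. (u x)\<^sup>2)
                          + integral {-L..L} (\<lambda>x. (deriv u x)\<^sup>2)))" .
  qed
qed


end
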